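(* Let $(X_n)_{n\in\mathbb Z}$ be the fractionally integrated noise F($d$) with $d\in(0,1/2)$. For $k\ge1$ let $\widetilde{X'_k}(1)=-\sum_{j=1}^{k}a_jX_{k+1-j}$. Then there exists a constant $C>0$, depending only on $d$ and $\sigma_\varepsilon^2$, such that $$\mathbb{E}\big[(X_{k+1}-\widetilde{X'_k}(1))^2\big]=\sigma_\varepsilon^2+Ck^{-1}+o(k^{-1})\qquad(k\to\infty).$$
   Context: Fractionally integrated noise F($d$), $d\in(0,1/2)$, is the stationary solution of $X_n=(1-B)^{-d}\varepsilon_n$. Here $B$ is the backward shift and $(\varepsilon_n)_{n\in\mathbb Z}$ is a sequence of uncorrelated random variables with mean $0$ and variance $\sigma_\varepsilon^2>0$. Equivalently, $X_n=\sum_{j\ge0}b_j\varepsilon_{n-j}$ with $b_j=\frac{\Gamma(j+d)}{\Gamma(j+1)\Gamma(d)}$, and $\varepsilon_n=\sum_{j\ge0}a_jX_{n-j}$ with $a_0=1$ and $a_j=\frac{\Gamma(j-d)}{\Gamma(j+1)\Gamma(-d)}$ for $j\ge1$. Its autocovariance is $\sigma(j)=\sigma_\varepsilon^2\frac{(-1)^j\Gamma(1-2d)}{\Gamma(j-d+1)\Gamma(1-j-d)}$ for $j\ge0$. *)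

theory Defs
  imports "HOL-Probability.Probability" "HOL-Library.Landau_Symbols"
begin

definition fi_b :: "real \<Rightarrow> nat \<Rightarrow> real" where
  "fi_b d j = Gamma (real j + d) / (Gamma (real j + 1) * Gamma d)"

definition fi_a :: "real \<Rightarrow> nat \<Rightarrow> real" where
  "fi_a d j = (if j = 0 then 1 else Gamma (real j - d) / (Gamma (real j + 1) * Gamma (- d)))"

text \<open>(eps_n) is uncorrelated with mean 0 and variance s2, and X_n is the
  stationary solution of X = (1-B)^(-d) eps, i.e. the L2-limit
  X_n = sum_{j>=0} b_j eps_{n-j}.\<close>
definition fi_noise ::
  "'a measure \<Rightarrow> real \<Rightarrow> real \<Rightarrow> (int \<Rightarrow> 'a \<Rightarrow> real) \<Rightarrow> (int \<Rightarrow> 'a \<Rightarrow> real) \<Rightarrow> bool" where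
  "fi_noise M d s2 eps X \<longleftrightarrow>
     prob_space M \<and>
     (\<forall>n. eps n \<in> borel_measurable M \<and> integrable M (\<lambda>\<omega>. (eps n \<omega>)\<^sup>2) \<and>
          (\<integral>\<omega>. eps n \<omega> \<partial>M) = 0 \<and> (\<integral>\<omega>. (eps n \<omega>)\<^sup>2 \<partial>M) = s2) \<and>
     (\<forall>m n. m \<noteq> n \<longrightarrow> (\<integral>\<omega>. eps m \<omega> * eps n \<omega> \<partial>M) = 0) \<and>
     (\<forall>n. X n \<in> borel_measurable M \<and> integrable M (\<lambda>\<omega>. (X n \<omega>)\<^sup>2) \<and>
          ((\<lambda>m. \<integral>\<omega>. (X n \<omega> - (\<Sum>j<m. fi_b d j * eps (n - int j) \<omega>))\<^sup>2 \<partial>M)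
             \<longlonglongrightarrow> 0))"

definition fi_pred :: "real \<Rightarrow> (int \<Rightarrow> 'a \<Rightarrow> real) \<Rightarrow> nat \<Rightarrow> 'a \<Rightarrow> real" where
  "fi_pred d X k \<omega> = - (\<Sum>j=1..k. fi_a d j * X (int k + 1 - int j) \<omega>)"

end

theory Submission
  imports Defs "HOL-Real_Asymp.Real_Asymp"
begin


definition BB :: "real \<Rightarrow> nat \<Rightarrow> real" where "BB d n = pochhammer d n / fact n"
definition AA :: "real \<Rightarrow> nat \<Rightarrow> real" where "AA d n = pochhammer (-d) n / fact n"
definition AS :: "real \<Rightarrow> nat \<Rightarrow> real" where "AS d k = pochhammer (1-d) k / fact k"

lemma fi_b_eq: assumes "0 < d" shows "fi_b d j = BB d j"
proof -
  have "d \<notin> \<int>\<^sub>\<le>\<^sub>0" using assms by (auto elim!: nonpos_Ints_cases)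
  then have "pochhammer d j = Gamma (d + real j) / Gamma d" by (rule pochhammer_Gamma)
  moreover have "Gamma (real j + 1) = fact j" using Gamma_fact[of j] by (simp add: add.commute)
  ultimately show ?thesis unfolding fi_b_def BB_def by (simp add: add.commute field_simps)
qed

lemma fi_a_eq: assumes "0 < d" "d < 1" shows "fi_a d j = AA d j"
proof (cases "j = 0")
  case True then show ?thesis by (simp add: fi_a_def AA_def)
next
  case False
  have "-d \<notin> \<int>\<^sub>\<le>\<^sub>0"
  proof
    assume "-d \<in> \<int>\<^sub>\<le>\<^sub>0" then obtain n where "-d = - real n" by (auto elim!: nonpos_Ints_cases')
    then show False using assms by (cases n) auto
  qed
  then have "pochhammer (-d) j = Gamma (-d + real j) / Gamma (-d)" by (rule pochhammer_Gamma)
  moreover have "Gamma (real j + 1) = fact j" using Gamma_fact[of j] by (simp add: add.commute)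
  ultimately show ?thesis using False unfolding fi_a_def AA_def by (simp add: add.commute field_simps)
qed

lemma BB_Suc: "BB d (Suc n) * real (Suc n) = BB d n * (d + real n)"
proof -
  have f: "fact n > (0::real)" by simp
  show ?thesis unfolding BB_def pochhammer_Suc fact_Suc using f
    by (simp add: divide_simps del: of_nat_Suc)
qed

lemma AS_Suc: "AS d (Suc k) = AS d k + AA d (Suc k)"
proof -
  have f: "fact k > (0::real)" by simp
  have "pochhammer (-d) (Suc k) = -d * pochhammer (1-d) k" by (simp add: pochhammer_rec)
  moreover have "pochhammer (1-d) (Suc k) = pochhammer (1-d) k * (1 - d + real k)" by (simp add: pochhammer_Suc)
  ultimately show ?thesis unfolding AS_def AA_def fact_Suc using f
    by (simp add: divide_simps del: of_nat_Suc) (simp add: algebra_simps)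
qed

lemma AS_sum: "AS d k = (\<Sum>j\<le>k. AA d j)"
  by (induction k) (simp_all add: AS_Suc, simp add: AS_def AA_def)

lemma AA_Suc: "AA d (Suc k) * real (Suc k) = - d * AS d k"
proof -
  have f: "fact k > (0::real)" by simp
  have "pochhammer (-d) (Suc k) = -d * pochhammer (1-d) k" by (simp add: pochhammer_rec)
  then show ?thesis unfolding AS_def AA_def fact_Suc using f
    by (simp add: divide_simps del: of_nat_Suc)
qed

definition coef :: "real \<Rightarrow> nat \<Rightarrow> nat \<Rightarrow> real" where
  "coef d k l = (\<Sum>j\<le>min k l. AA d j * BB d (l - j))"

lemma coef_tail: "coef d k (k + 1 + n) = AS d k * real (n+1) * BB d (n+1) / real (k + 1 + n)"
proof (induction k arbitrary: n)
  case 0 then show ?case by (simp add: coef_def AA_def AS_def)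
next
  case (Suc k)
  have "coef d (Suc k) (Suc k + 1 + n) = coef d k (k + 1 + Suc n) + AA d (Suc k) * BB d (n + 1)"
    unfolding coef_def by (simp add: Suc_diff_le)
  also have "\<dots> = AS d k * real (n+2) * BB d (n+2) / real (k + 2 + n) + AA d (Suc k) * BB d (n + 1)"
    using Suc.IH[of "Suc n"] by (simp add: add_ac)
  also have "\<dots> = AS d (Suc k) * real (n+1) * BB d (n+1) / real (Suc k + 1 + n)"
  proof -
    have b: "BB d (n+2) * real (n+2) = BB d (n+1) * (d + real (n+1))"
      using BB_Suc[of d "n+1"] by (simp add: add_ac)
    have a: "AA d (Suc k) * real (Suc k) = - d * AS d k" by (rule AA_Suc)
    have s: "AS d (Suc k) = AS d k + AA d (Suc k)" by (rule AS_Suc)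
    have "AA d (Suc k) = - d * AS d k / real (Suc k)" using a by (simp add: field_simps)
    have "AS d k * real (n+2) * BB d (n+2) / real (k + 2 + n) + AA d (Suc k) * BB d (n + 1)
        = (AS d k * (BB d (n+2) * real (n+2)) + BB d (n + 1) * (AA d (Suc k) * real (Suc k + 1 + n))) / real (Suc k + 1 + n)"
      by (simp add: field_simps)
    also have "AA d (Suc k) * real (Suc k + 1 + n) = AA d (Suc k) * real (Suc k) + AA d (Suc k) * real (n+1)"
      by (simp add: algebra_simps)
    also have "AS d k * (BB d (n+2) * real (n+2)) + BB d (n + 1) * (AA d (Suc k) * real (Suc k) + AA d (Suc k) * real (n+1))
       = AS d (Suc k) * real (n+1) * BB d (n+1)"
      unfolding b a s by (simp add: algebra_simps)
    finally show ?thesis .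
  qed
  finally show ?case .
qed


definition L2 :: "'a measure \<Rightarrow> ('a \<Rightarrow> real) \<Rightarrow> bool" where
  "L2 M f \<longleftrightarrow> f \<in> borel_measurable M \<and> integrable M (\<lambda>x. (f x)\<^sup>2)"

lemma abs_mult_le_sq: "\<bar>a * b\<bar> \<le> a\<^sup>2 + b\<^sup>2" for a b :: real
proof -
  have "0 \<le> (\<bar>a\<bar> - \<bar>b\<bar>)\<^sup>2" by simp
  then have "2 * (\<bar>a\<bar> * \<bar>b\<bar>) \<le> \<bar>a\<bar>\<^sup>2 + \<bar>b\<bar>\<^sup>2" by (simp add: power2_diff)
  moreover have "0 \<le> \<bar>a\<bar> * \<bar>b\<bar>" by simp
  ultimately have "\<bar>a\<bar> * \<bar>b\<bar> \<le> a\<^sup>2 + b\<^sup>2" using power2_abs[of a] power2_abs[of b] by linarith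
  then show ?thesis by (simp add: abs_mult)
qed

lemma L2_prod_integrable: "L2 M f \<Longrightarrow> L2 M g \<Longrightarrow> integrable M (\<lambda>x. f x * g x)"
  unfolding L2_def
  by (rule Bochner_Integration.integrable_bound[where f="\<lambda>x. (f x)\<^sup>2 + (g x)\<^sup>2"]) (auto intro!: abs_mult_le_sq)

lemma L2_add: "L2 M f \<Longrightarrow> L2 M g \<Longrightarrow> L2 M (\<lambda>x. f x + g x)"
proof -
  assume f: "L2 M f" and g: "L2 M g"
  have "(\<lambda>x. (f x + g x)\<^sup>2) = (\<lambda>x. (f x)\<^sup>2 + (g x)\<^sup>2 + 2 * (f x * g x))"
    by (simp add: power2_sum fun_eq_iff)
  moreover have "integrable M (\<lambda>x. (f x)\<^sup>2 + (g x)\<^sup>2 + 2 * (f x * g x))"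
    using f g L2_prod_integrable[OF f g] unfolding L2_def by auto
  ultimately show ?thesis using f g unfolding L2_def by auto
qed

lemma L2_cmult: "L2 M f \<Longrightarrow> L2 M (\<lambda>x. c * f x)"
  unfolding L2_def by (auto simp add: power_mult_distrib)

lemma L2_diff: "L2 M f \<Longrightarrow> L2 M g \<Longrightarrow> L2 M (\<lambda>x. f x - g x)"
  using L2_add[of M f "\<lambda>x. -1 * g x"] L2_cmult[of M g "-1"] by simp

lemma L2_zero: "L2 M (\<lambda>x. 0)"
  unfolding L2_def by simp

lemma L2_sum: "finite I \<Longrightarrow> (\<And>i. i \<in> I \<Longrightarrow> L2 M (f i)) \<Longrightarrow> L2 M (\<lambda>x. \<Sum>i\<in>I. f i x)"
  by (induction I rule: finite_induct) (auto intro!: L2_add L2_zero)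

lemma expect_orth:
  fixes eps :: "int \<Rightarrow> 'a \<Rightarrow> real"
  assumes "finite L" "inj_on \<iota> L" "\<And>n. L2 M (eps n)" "\<And>n. (\<integral>x. (eps n x)\<^sup>2 \<partial>M) = s2"
    "\<And>m n. m \<noteq> n \<Longrightarrow> (\<integral>x. eps m x * eps n x \<partial>M) = 0"
  shows "(\<integral>x. (\<Sum>l\<in>L. \<gamma> l * eps (\<iota> l) x)\<^sup>2 \<partial>M) = s2 * (\<Sum>l\<in>L. (\<gamma> l)\<^sup>2)"
proof -
  have sq: "(\<Sum>l\<in>L. \<gamma> l * eps (\<iota> l) x)\<^sup>2 = (\<Sum>l\<in>L. \<Sum>l'\<in>L. \<gamma> l * \<gamma> l' * (eps (\<iota> l) x * eps (\<iota> l') x))" for x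
    by (simp add: power2_eq_square sum_product algebra_simps)
  have int: "integrable M (\<lambda>x. eps (\<iota> l) x * eps (\<iota> l') x)" for l l'
    using L2_prod_integrable assms(3) by blast
  have inner: "(\<Sum>l'\<in>L. \<gamma> l * \<gamma> l' * (\<integral>x. eps (\<iota> l) x * eps (\<iota> l') x \<partial>M)) = s2 * (\<gamma> l)\<^sup>2"
    if l: "l \<in> L" for l
  proof -
    have "(\<Sum>l'\<in>L. \<gamma> l * \<gamma> l' * (\<integral>x. eps (\<iota> l) x * eps (\<iota> l') x \<partial>M))
        = (\<Sum>l'\<in>L. if l' = l then s2 * (\<gamma> l)\<^sup>2 else 0)"
    proof (rule sum.cong)
      fix l' assume l': "l' \<in> L"
      show "\<gamma> l * \<gamma> l' * (\<integral>x. eps (\<iota> l) x * eps (\<iota> l') x \<partial>M) = (if l' = l then s2 * (\<gamma> l)\<^sup>2 else 0)"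
      proof (cases "l' = l")
        case True then show ?thesis using assms(4)[of "\<iota> l"] by (simp add: power2_eq_square)
      next
        case False
        then have "\<iota> l \<noteq> \<iota> l'" using assms(2) l l' by (auto dest: inj_onD)
        then show ?thesis using False assms(5) by simp
      qed
    qed simp
    also have "\<dots> = s2 * (\<gamma> l)\<^sup>2" using l assms(1) by simp
    finally show ?thesis .
  qed
  have "(\<integral>x. (\<Sum>l\<in>L. \<gamma> l * eps (\<iota> l) x)\<^sup>2 \<partial>M)
      = (\<Sum>l\<in>L. \<Sum>l'\<in>L. \<gamma> l * \<gamma> l' * (\<integral>x. eps (\<iota> l) x * eps (\<iota> l') x \<partial>M))"
    unfolding sq using int by (simp add: integral_sum)
  also have "\<dots> = (\<Sum>l\<in>L. s2 * (\<gamma> l)\<^sup>2)" using inner by simp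
  finally show ?thesis by (simp add: sum_distrib_left)
qed

lemma sq_diff_bound: "\<bar>y\<^sup>2 - z\<^sup>2\<bar> \<le> t * z\<^sup>2 + (1 + 1/t) * (y - z)\<^sup>2" if "t > 0" for y z t :: real
proof -
  define e where "e = y - z"
  have y: "y = z + e" by (simp add: e_def)
  have "\<bar>2 * z * e\<bar> \<le> t * z\<^sup>2 + e\<^sup>2 / t"
  proof -
    have "0 \<le> (sqrt t * \<bar>z\<bar> - \<bar>e\<bar> / sqrt t)\<^sup>2" by simp
    also have "\<dots> = t * z\<^sup>2 - 2 * \<bar>z\<bar> * \<bar>e\<bar> + e\<^sup>2 / t"
      using that by (simp add: power2_diff power_divide real_sqrt_pow2 field_simps power2_eq_square)
    finally show ?thesis by (simp add: abs_mult)
  qed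
  moreover have "y\<^sup>2 - z\<^sup>2 = 2 * z * e + e\<^sup>2" unfolding y by (simp add: power2_sum)
  moreover have "\<bar>2 * z * e + e\<^sup>2\<bar> \<le> \<bar>2 * z * e\<bar> + e\<^sup>2" by (simp add: abs_triangle_ineq[THEN order_trans])
  moreover have "(1 + 1/t) * e\<^sup>2 = e\<^sup>2 + e\<^sup>2 / t" by (simp add: field_simps)
  ultimately show ?thesis unfolding e_def[symmetric] by linarith
qed

lemma L2_conv_sq:
  assumes Z: "L2 M Z" and Y: "\<And>m. L2 M (Y m)"
    and lim: "(\<lambda>m. \<integral>x. (Z x - Y m x)\<^sup>2 \<partial>M) \<longlonglongrightarrow> 0"
  shows "(\<lambda>m. \<integral>x. (Y m x)\<^sup>2 \<partial>M) \<longlonglongrightarrow> (\<integral>x. (Z x)\<^sup>2 \<partial>M)"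
proof (rule LIMSEQ_I)
  fix r :: real assume r: "r > 0"
  define EZ where "EZ = (\<integral>x. (Z x)\<^sup>2 \<partial>M)"
  have EZ0: "EZ \<ge> 0" unfolding EZ_def by simp
  define t where "t = r / (2 * (EZ + 1))"
  have t: "t > 0" using r EZ0 by (simp add: t_def)
  have tE: "t * EZ < r / 2" using r EZ0 by (simp add: t_def field_simps)
  have "r / 2 / (1 + 1/t) > 0" using r t by (simp add: field_simps add_pos_pos)
  from LIMSEQ_D[OF lim this] obtain N where N: "\<And>m. m \<ge> N \<Longrightarrow> norm ((\<integral>x. (Z x - Y m x)\<^sup>2 \<partial>M) - 0) < r / 2 / (1 + 1/t)"
    by blast
  show "\<exists>N. \<forall>m\<ge>N. norm ((\<integral>x. (Y m x)\<^sup>2 \<partial>M) - (\<integral>x. (Z x)\<^sup>2 \<partial>M)) < r"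
  proof (intro exI allI impI)
    fix m assume m: "m \<ge> N"
    have iY: "integrable M (\<lambda>x. (Y m x)\<^sup>2)" and iZ: "integrable M (\<lambda>x. (Z x)\<^sup>2)"
      and iD: "integrable M (\<lambda>x. (Y m x - Z x)\<^sup>2)"
      using Y Z L2_diff[OF Y Z] unfolding L2_def by auto
    have "\<bar>(\<integral>x. (Y m x)\<^sup>2 \<partial>M) - EZ\<bar> = \<bar>\<integral>x. (Y m x)\<^sup>2 - (Z x)\<^sup>2 \<partial>M\<bar>"
      unfolding EZ_def using iY iZ by simp
    also have "\<dots> \<le> (\<integral>x. \<bar>(Y m x)\<^sup>2 - (Z x)\<^sup>2\<bar> \<partial>M)" by (rule integral_abs_bound)
    also have "\<dots> \<le> (\<integral>x. t * (Z x)\<^sup>2 + (1 + 1/t) * (Y m x - Z x)\<^sup>2 \<partial>M)"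
      using iY iZ iD t by (intro integral_mono) (auto intro!: sq_diff_bound)
    also have "\<dots> = t * EZ + (1 + 1/t) * (\<integral>x. (Z x - Y m x)\<^sup>2 \<partial>M)"
      using iZ iD unfolding EZ_def by (simp add: power2_commute)
    also have "\<dots> < r / 2 + (1 + 1/t) * (r / 2 / (1 + 1/t))"
    proof -
      have "(\<integral>x. (Z x - Y m x)\<^sup>2 \<partial>M) < r / 2 / (1 + 1/t)" using N[OF m] by simp
      moreover have "1 + 1/t > 0" using t by (simp add: add_pos_pos)
      ultimately have "(1 + 1/t) * (\<integral>x. (Z x - Y m x)\<^sup>2 \<partial>M) < (1 + 1/t) * (r / 2 / (1 + 1/t))"
        by (rule mult_strict_left_mono)
      then show ?thesis using tE by linarith
    qed
    also have "\<dots> = r"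
    proof -
      have "1 + 1/t \<noteq> 0" using t by (simp add: add_pos_pos[THEN less_imp_neq, symmetric])
      moreover have "\<And>c x::real. c \<noteq> 0 \<Longrightarrow> c * (x / c) = x" by simp
      ultimately have "(1 + 1/t) * (r / 2 / (1 + 1/t)) = r / 2" by blast
      then show ?thesis by linarith
    qed
    finally show "norm ((\<integral>x. (Y m x)\<^sup>2 \<partial>M) - (\<integral>x. (Z x)\<^sup>2 \<partial>M)) < r" unfolding EZ_def by simp
  qed
qed


lemma reindex_conv:
  fixes g :: "nat \<Rightarrow> nat \<Rightarrow> real"
  shows "(\<Sum>j\<le>k. \<Sum>i<m - j. g j (i + j)) = (\<Sum>l<m. \<Sum>j\<le>min k l. g j l)"
proof -
  have 1: "(\<Sum>i<m - j. g j (i + j)) = (\<Sum>l<m. if j \<le> l then g j l else 0)" for j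
  proof (cases "j \<le> m")
    case True
    have "(\<Sum>i<m - j. g j (i + j)) = (\<Sum>i\<in>{0..<m - j}. g j (i + j))" by (simp add: atLeast0LessThan)
    also have "\<dots> = sum (g j) {0 + j..<(m - j) + j}" by (rule sum.shift_bounds_nat_ivl[symmetric])
    also have "\<dots> = sum (g j) {l \<in> {..<m}. j \<le> l}" using True by (intro sum.cong) auto
    also have "\<dots> = (\<Sum>l<m. if j \<le> l then g j l else 0)" by (rule sum.inter_filter) simp
    finally show ?thesis .
  next
    case False
    then have "m - j = 0" by simp
    then show ?thesis using False by (auto intro!: sum.neutral)
  qed
  have 2: "(\<Sum>j\<le>k. if j \<le> l then g j l else 0) = (\<Sum>j\<le>min k l. g j l)" for l
  proof -
    have "(\<Sum>j\<le>k. if j \<le> l then g j l else 0) = sum (\<lambda>j. g j l) {j \<in> {..k}. j \<le> l}"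
      by (rule sum.inter_filter[symmetric]) simp
    also have "{j \<in> {..k}. j \<le> l} = {..min k l}" by auto
    finally show ?thesis .
  qed
  have "(\<Sum>j\<le>k. \<Sum>l<m. if j \<le> l then g j l else 0) = (\<Sum>l<m. \<Sum>j\<le>k. if j \<le> l then g j l else 0)"
    by (rule sum.swap)
  then show ?thesis unfolding 1 2 .
qed

lemma sq_sum_le: "(u + v)\<^sup>2 \<le> 2 * u\<^sup>2 + 2 * v\<^sup>2" for u v :: real
proof -
  have "0 \<le> (u - v)\<^sup>2" by simp
  then show ?thesis by (simp add: power2_diff power2_sum)
qed

lemma L2_sum_tendsto:
  assumes "finite J" "\<And>j m. j \<in> J \<Longrightarrow> L2 M (D j m)"
    "\<And>j. j \<in> J \<Longrightarrow> (\<lambda>m. \<integral>x. (D j m x)\<^sup>2 \<partial>M) \<longlonglongrightarrow> 0"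
  shows "(\<lambda>m. \<integral>x. (\<Sum>j\<in>J. D j m x)\<^sup>2 \<partial>M) \<longlonglongrightarrow> 0"
  using assms
proof (induction J rule: finite_induct)
  case empty then show ?case by simp
next
  case (insert a J)
  have LJ: "L2 M (\<lambda>x. \<Sum>j\<in>J. D j m x)" for m using insert by (intro L2_sum) auto
  have La: "L2 M (D a m)" for m using insert by auto
  have IH: "(\<lambda>m. \<integral>x. (\<Sum>j\<in>J. D j m x)\<^sup>2 \<partial>M) \<longlonglongrightarrow> 0" using insert by auto
  have Ia: "(\<lambda>m. \<integral>x. (D a m x)\<^sup>2 \<partial>M) \<longlonglongrightarrow> 0" using insert by auto
  show ?case
  proof (rule tendsto_sandwich[where f="\<lambda>_. 0" and h="\<lambda>m. 2 * (\<integral>x. (D a m x)\<^sup>2 \<partial>M) + 2 * (\<integral>x. (\<Sum>j\<in>J. D j m x)\<^sup>2 \<partial>M)"])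
    show "\<forall>\<^sub>F m in sequentially. 0 \<le> (\<integral>x. (\<Sum>j\<in>insert a J. D j m x)\<^sup>2 \<partial>M)" by simp
    show "\<forall>\<^sub>F m in sequentially. (\<integral>x. (\<Sum>j\<in>insert a J. D j m x)\<^sup>2 \<partial>M)
        \<le> 2 * (\<integral>x. (D a m x)\<^sup>2 \<partial>M) + 2 * (\<integral>x. (\<Sum>j\<in>J. D j m x)\<^sup>2 \<partial>M)"
    proof (intro always_eventually allI)
      fix m
      have "(\<integral>x. (\<Sum>j\<in>insert a J. D j m x)\<^sup>2 \<partial>M) = (\<integral>x. (D a m x + (\<Sum>j\<in>J. D j m x))\<^sup>2 \<partial>M)"
        using insert by simp
      also have "\<dots> \<le> (\<integral>x. 2 * (D a m x)\<^sup>2 + 2 * (\<Sum>j\<in>J. D j m x)\<^sup>2 \<partial>M)"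
        using L2_add[OF La LJ, of m m] La[of m] LJ[of m] unfolding L2_def
        by (intro integral_mono) (auto intro!: sq_sum_le)
      also have "\<dots> = 2 * (\<integral>x. (D a m x)\<^sup>2 \<partial>M) + 2 * (\<integral>x. (\<Sum>j\<in>J. D j m x)\<^sup>2 \<partial>M)"
        using La[of m] LJ[of m] unfolding L2_def by simp
      finally show "(\<integral>x. (\<Sum>j\<in>insert a J. D j m x)\<^sup>2 \<partial>M)
        \<le> 2 * (\<integral>x. (D a m x)\<^sup>2 \<partial>M) + 2 * (\<integral>x. (\<Sum>j\<in>J. D j m x)\<^sup>2 \<partial>M)" .
    qed
    show "(\<lambda>m. 2 * (\<integral>x. (D a m x)\<^sup>2 \<partial>M) + 2 * (\<integral>x. (\<Sum>j\<in>J. D j m x)\<^sup>2 \<partial>M)) \<longlonglongrightarrow> 0"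
      using tendsto_add[OF tendsto_mult_right_zero[OF Ia] tendsto_mult_right_zero[OF IH], of 2 2] by simp
  qed simp
qed

lemma error_limit:
  assumes d: "0 < d" "d < 1/2" and N: "fi_noise M d s2 eps X"
  shows "(\<lambda>m. s2 * (\<Sum>l<m. (coef d k l)\<^sup>2)) \<longlonglongrightarrow> (\<integral>\<omega>. (X (int k + 1) \<omega> - fi_pred d X k \<omega>)\<^sup>2 \<partial>M)"
proof -
  have epsL2: "\<And>n. L2 M (eps n)" and eps2: "\<And>n. (\<integral>x. (eps n x)\<^sup>2 \<partial>M) = s2"
    and orth: "\<And>m n. m \<noteq> n \<Longrightarrow> (\<integral>x. eps m x * eps n x \<partial>M) = 0"
    and XL2: "\<And>n. L2 M (X n)"
    and Xlim: "\<And>n. (\<lambda>m. \<integral>\<omega>. (X n \<omega> - (\<Sum>j<m. fi_b d j * eps (n - int j) \<omega>))\<^sup>2 \<partial>M) \<longlonglongrightarrow> 0"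
    using N unfolding fi_noise_def L2_def by auto
  define S where "S n m \<omega> = (\<Sum>i<m. fi_b d i * eps (n - int i) \<omega>)" for n m \<omega>
  have SL2: "L2 M (S n m)" for n m unfolding S_def by (intro L2_sum L2_cmult epsL2) auto
  define e where "e \<omega> = (\<Sum>j\<le>k. AA d j * X (int k + 1 - int j) \<omega>)" for \<omega>
  have e_eq: "X (int k + 1) \<omega> - fi_pred d X k \<omega> = e \<omega>" for \<omega>
  proof -
    have "{..k} = insert 0 {1..k}" by auto
    then have "e \<omega> = AA d 0 * X (int k + 1) \<omega> + (\<Sum>j=1..k. AA d j * X (int k + 1 - int j) \<omega>)"
      unfolding e_def by simp
    also have "(\<Sum>j=1..k. AA d j * X (int k + 1 - int j) \<omega>) = (\<Sum>j=1..k. fi_a d j * X (int k + 1 - int j) \<omega>)"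
      using fi_a_eq[of d] d by simp
    finally show ?thesis unfolding fi_pred_def by (simp add: AA_def)
  qed
  have eL2: "L2 M e" unfolding e_def by (intro L2_sum L2_cmult XL2) auto
  define Y where "Y m \<omega> = (\<Sum>j\<le>k. AA d j * S (int k + 1 - int j) (m - j) \<omega>)" for m \<omega>
  have YL2: "L2 M (Y m)" for m unfolding Y_def by (intro L2_sum L2_cmult SL2) auto
  have Y_eq: "Y m \<omega> = (\<Sum>l<m. coef d k l * eps (int k + 1 - int l) \<omega>)" for m \<omega>
  proof -
    have "Y m \<omega> = (\<Sum>j\<le>k. \<Sum>i<m - j. (\<lambda>j l. AA d j * BB d (l - j) * eps (int k + 1 - int l) \<omega>) j (i + j))"
      unfolding Y_def S_def using fi_b_eq[of d] d
      by (simp add: sum_distrib_left algebra_simps)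
    also have "\<dots> = (\<Sum>l<m. \<Sum>j\<le>min k l. AA d j * BB d (l - j) * eps (int k + 1 - int l) \<omega>)"
      by (rule reindex_conv)
    also have "\<dots> = (\<Sum>l<m. coef d k l * eps (int k + 1 - int l) \<omega>)"
      unfolding coef_def by (simp add: sum_distrib_right)
    finally show ?thesis .
  qed
  have EY: "(\<integral>\<omega>. (Y m \<omega>)\<^sup>2 \<partial>M) = s2 * (\<Sum>l<m. (coef d k l)\<^sup>2)" for m
    unfolding Y_eq
    by (rule expect_orth[OF _ _ epsL2 eps2 orth]) (auto simp: inj_on_def)
  have diff: "e \<omega> - Y m \<omega> = (\<Sum>j\<le>k. AA d j * (X (int k + 1 - int j) \<omega> - S (int k + 1 - int j) (m - j) \<omega>))" for m \<omega>
    unfolding e_def Y_def by (simp add: sum_subtractf algebra_simps)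
  have lim: "(\<lambda>m. \<integral>\<omega>. (e \<omega> - Y m \<omega>)\<^sup>2 \<partial>M) \<longlonglongrightarrow> 0"
    unfolding diff
  proof (rule L2_sum_tendsto)
    fix j m show "L2 M (\<lambda>\<omega>. AA d j * (X (int k + 1 - int j) \<omega> - S (int k + 1 - int j) (m - j) \<omega>))"
      by (intro L2_cmult L2_diff XL2 SL2)
  next
    fix j
    have "(\<lambda>m. \<integral>\<omega>. (X (int k + 1 - int j) \<omega> - S (int k + 1 - int j) m \<omega>)\<^sup>2 \<partial>M) \<longlonglongrightarrow> 0"
      using Xlim unfolding S_def by blast
    then have "(\<lambda>m. \<integral>\<omega>. (X (int k + 1 - int j) \<omega> - S (int k + 1 - int j) (m - j) \<omega>)\<^sup>2 \<partial>M) \<longlonglongrightarrow> 0"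
      by (rule filterlim_compose) (rule filterlim_minus_const_nat_at_top)
    then have "(\<lambda>m. (AA d j)\<^sup>2 * (\<integral>\<omega>. (X (int k + 1 - int j) \<omega> - S (int k + 1 - int j) (m - j) \<omega>)\<^sup>2 \<partial>M)) \<longlonglongrightarrow> 0"
      by (rule tendsto_mult_right_zero)
    moreover have "(\<integral>\<omega>. (AA d j * (X (int k + 1 - int j) \<omega> - S (int k + 1 - int j) (m - j) \<omega>))\<^sup>2 \<partial>M)
       = (AA d j)\<^sup>2 * (\<integral>\<omega>. (X (int k + 1 - int j) \<omega> - S (int k + 1 - int j) (m - j) \<omega>)\<^sup>2 \<partial>M)" for m
      by (simp add: power_mult_distrib)
    ultimately show "(\<lambda>m. \<integral>\<omega>. (AA d j * (X (int k + 1 - int j) \<omega> - S (int k + 1 - int j) (m - j) \<omega>))\<^sup>2 \<partial>M) \<longlonglongrightarrow> 0"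
      by simp
  qed simp
  have "(\<lambda>m. \<integral>\<omega>. (Y m \<omega>)\<^sup>2 \<partial>M) \<longlonglongrightarrow> (\<integral>\<omega>. (e \<omega>)\<^sup>2 \<partial>M)"
    by (rule L2_conv_sq[OF eL2 YL2 lim])
  then show ?thesis unfolding EY e_eq .
qed


lemma coef_0: "coef d k 0 = 1" by (simp add: coef_def AA_def BB_def)

lemma coef_mid: assumes "1 \<le> l" "l \<le> k" shows "coef d k l = 0"
proof -
  obtain l' where l: "l = Suc l'" using assms by (cases l) auto
  have "coef d k l = coef d l' (l' + 1 + 0) + AA d (Suc l') * BB d 0"
    unfolding coef_def l using assms l by (simp add: min_def)
  also have "\<dots> = AS d l' * BB d 1 / real (Suc l') + AA d (Suc l')"
    using coef_tail[of d l' 0] by (simp add: BB_def)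
  also have "\<dots> = 0" using AA_Suc[of d l'] by (simp add: BB_def field_simps)
  finally show ?thesis .
qed

lemma AS_pos: "d < 1 \<Longrightarrow> AS d k > 0"
  unfolding AS_def by (intro divide_pos_pos pochhammer_pos) auto

definition Tsum :: "real \<Rightarrow> nat \<Rightarrow> real" where
  "Tsum d k = (\<Sum>n. (real (n+1) * BB d (n+1) / real (k + 1 + n))\<^sup>2)"

lemma error_formula:
  assumes d: "0 < d" "d < 1/2" and s2: "s2 > 0" and N: "fi_noise M d s2 eps X"
  shows "summable (\<lambda>n. (real (n+1) * BB d (n+1) / real (k + 1 + n))\<^sup>2)"
    and "(\<integral>\<omega>. (X (int k + 1) \<omega> - fi_pred d X k \<omega>)\<^sup>2 \<partial>M) = s2 * (1 + (AS d k)\<^sup>2 * Tsum d k)"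
proof -
  define E where "E = (\<integral>\<omega>. (X (int k + 1) \<omega> - fi_pred d X k \<omega>)\<^sup>2 \<partial>M)"
  have "(\<lambda>m. s2 * (\<Sum>l<m. (coef d k l)\<^sup>2)) \<longlonglongrightarrow> E" unfolding E_def by (rule error_limit[OF d N])
  then have "(\<lambda>m. (1/s2) * (s2 * (\<Sum>l<m. (coef d k l)\<^sup>2))) \<longlonglongrightarrow> (1/s2) * E" by (rule tendsto_mult_left)
  then have "(\<lambda>l. (coef d k l)\<^sup>2) sums (E / s2)" using s2 unfolding sums_def by simp
  moreover have "(\<Sum>i<k+1. (coef d k i)\<^sup>2) = 1"
  proof -
    have "{..<k+1} = insert 0 {1..k}" by auto
    then show ?thesis using coef_mid[of _ k d] by (simp add: coef_0)
  qed
  ultimately have "(\<lambda>n. (coef d k (n + (k+1)))\<^sup>2) sums (E / s2 - 1)"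
    using sums_iff_shift[of "\<lambda>l. (coef d k l)\<^sup>2" "k+1" "E/s2 - 1"] by simp
  moreover have "coef d k (n + (k+1)) = AS d k * (real (n+1) * BB d (n+1) / real (k + 1 + n))" for n
    using coef_tail[of d k n] by (simp add: add_ac)
  ultimately have S: "(\<lambda>n. (AS d k * (real (n+1) * BB d (n+1) / real (k + 1 + n)))\<^sup>2) sums (E / s2 - 1)"
    by simp
  then have S: "(\<lambda>n. (AS d k)\<^sup>2 * (real (n+1) * BB d (n+1) / real (k + 1 + n))\<^sup>2) sums (E / s2 - 1)"
    by (simp only: power_mult_distrib)
  have A: "(AS d k)\<^sup>2 \<noteq> 0" using AS_pos[of d k] d by simp
  have S2: "(\<lambda>n. (real (n+1) * BB d (n+1) / real (k + 1 + n))\<^sup>2) sums ((E / s2 - 1) / (AS d k)\<^sup>2)"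
    using sums_mult[OF S, of "1 / (AS d k)\<^sup>2"] A by simp
  then show "summable (\<lambda>n. (real (n+1) * BB d (n+1) / real (k + 1 + n))\<^sup>2)" by (rule sums_summable)
  from S2 have "Tsum d k = (E / s2 - 1) / (AS d k)\<^sup>2" unfolding Tsum_def by (rule sums_unique[symmetric])
  then show "E = s2 * (1 + (AS d k)\<^sup>2 * Tsum d k)" using A s2 by (simp add: field_simps)
qed


lemma poch_asymp:
  assumes z: "(z::real) > 0"
  shows "(\<lambda>n. pochhammer z n / fact n * real n powr (1 - z)) \<longlonglongrightarrow> 1 / Gamma z"
proof -
  have G: "Gamma z > 0" using z by (rule Gamma_real_pos)
  have "(\<lambda>n. inverse (Gamma_series z n) * (real n / (z + real n))) \<longlonglongrightarrow> inverse (Gamma z) * 1"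
  proof (intro tendsto_intros)
    show "Gamma z \<noteq> 0" using G by simp
    show "(\<lambda>n. real n / (z + real n)) \<longlonglongrightarrow> 1" by real_asymp
  qed
  moreover have "eventually (\<lambda>n. inverse (Gamma_series z n) * (real n / (z + real n)) =
      pochhammer z n / fact n * real n powr (1 - z)) sequentially"
    using eventually_gt_at_top[of "0::nat"]
  proof eventually_elim
    case (elim n)
    have p: "pochhammer z (n+1) = pochhammer z n * (z + real n)" by (simp add: pochhammer_Suc)
    have zn: "z + real n > 0" using z by simp
    have e: "exp (z * ln (real n)) = real n powr z" using elim by (simp add: powr_def)
    have q: "real n powr (1 - z) = real n / real n powr z" using elim by (simp add: powr_diff)
    have pz: "real n powr z > 0" using elim by simp
    have nz: "z + real n \<noteq> 0" "real n powr z \<noteq> 0" "(fact n::real) \<noteq> 0" using zn pz by auto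
    show ?case unfolding Gamma_series_def p q using nz
      by (simp add: e divide_simps)
  qed
  ultimately show ?thesis by (simp add: tendsto_cong divide_inverse)
qed


lemma integrable_w:
  fixes p :: real assumes p: "p < 1"
  shows "integrable lborel (\<lambda>x::real. (1 + x) powr (p - 2) * indicator {0..} x)"
proof (rule integrableI_nonneg)
  show "(\<lambda>x::real. (1 + x) powr (p - 2) * indicator {0..} x) \<in> borel_measurable lborel" by measurable
  show "AE x in lborel. 0 \<le> (1 + x) powr (p - 2) * indicator {0..} x" by (auto split: split_indicator)
  have "(\<integral>\<^sup>+x. ennreal ((1 + x) powr (p - 2) * indicator {0..} x) \<partial>lborel)
      = (\<integral>\<^sup>+x. ennreal ((1 + x) powr (p - 2)) * indicator {0..} x \<partial>lborel)"
    by (intro nn_integral_cong) (auto split: split_indicator)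
  also have "\<dots> = ennreal (0 - (1 + 0) powr (p - 1) / (p - 1))"
  proof (rule nn_integral_FTC_atLeast)
    show "(\<lambda>x::real. (1 + x) powr (p - 2)) \<in> borel_measurable borel" by measurable
    fix x :: real assume x: "0 \<le> x"
    show "((\<lambda>x. (1 + x) powr (p - 1) / (p - 1)) has_real_derivative (1 + x) powr (p - 2)) (at x)"
    proof -
      have d1: "((\<lambda>x. 1 + x) has_real_derivative 1) (at x)"
        by (auto intro!: derivative_eq_intros)
      have "((\<lambda>x. (1 + x) powr (p - 1)) has_real_derivative
          ((p - 1) * (1 + x) powr (p - 1 - of_nat 1) * 1)) (at x)"
        using x by (intro DERIV_fun_powr[OF d1]) auto
      then have "((\<lambda>x. (1 + x) powr (p - 1) / (p - 1)) has_real_derivative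
          ((p - 1) * (1 + x) powr (p - 1 - 1) * 1) / (p - 1)) (at x)"
        by (intro DERIV_cdivide) simp
      moreover have "((p - 1) * (1 + x) powr (p - 1 - 1) * 1) / (p - 1) = (1 + x) powr (p - 2)"
        using p by (simp add: diff_diff_eq)
      ultimately show ?thesis by simp
    qed
    show "0 \<le> (1 + x) powr (p - 2)" by simp
  next
    have "((\<lambda>x::real. (1 + x) powr (p - 1)) \<longlongrightarrow> 0) at_top"
      using p by (intro tendsto_neg_powr) (simp, real_asymp)
    then show "((\<lambda>x::real. (1 + x) powr (p - 1) / (p - 1)) \<longlongrightarrow> 0) at_top"
      using tendsto_divide_zero by blast
  qed
  finally have eq: "(\<integral>\<^sup>+x. ennreal ((1 + x) powr (p - 2) * indicator {0..} x) \<partial>lborel) = ennreal (0 - (1 + 0) powr (p - 1) / (p - 1))" .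
  show "(\<integral>\<^sup>+x. ennreal ((1 + x) powr (p - 2) * indicator {0..} x) \<partial>lborel) < \<infinity>"
    unfolding eq by (simp only: ennreal_less_top infinity_ennreal_def)
qed

lemma frac_bound:
  fixes p y x :: real assumes p: "p < 1" "0 < p" and y: "0 \<le> x" "x \<le> y"
  shows "y powr p / (1 + y)\<^sup>2 \<le> (1 + x) powr (p - 2)"
proof -
  have "y powr p \<le> (1 + y) powr p" using y p by (intro powr_mono2) auto
  then have "y powr p / (1 + y)\<^sup>2 \<le> (1 + y) powr p / (1 + y)\<^sup>2"
    using y by (intro divide_right_mono) auto
  also have "(1 + y) powr p / (1 + y)\<^sup>2 = (1 + y) powr (p - 2)"
  proof -
    have "(1 + y)\<^sup>2 = (1 + y) powr 2" using y by simp
    then show ?thesis using y by (simp only: powr_diff)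
  qed
  also have "\<dots> \<le> (1 + x) powr (p - 2)" using y p by (intro powr_mono2') auto
  finally show ?thesis .
qed


definition qf :: "(nat \<Rightarrow> real) \<Rightarrow> real \<Rightarrow> nat \<Rightarrow> nat \<Rightarrow> real" where
  "qf \<beta> p k m = (\<beta> m)\<^sup>2 * (real m / real k) powr p / (1 + real m / real k)\<^sup>2"

definition Fk :: "(nat \<Rightarrow> real) \<Rightarrow> real \<Rightarrow> nat \<Rightarrow> real \<Rightarrow> real" where
  "Fk \<beta> p k x = (\<Sum>n. qf \<beta> p k (n+1) * indicator {real n / real k <.. real (n+1) / real k} x)"

lemma qf_nonneg: "qf \<beta> p k m \<ge> 0"
  unfolding qf_def by (intro divide_nonneg_nonneg mult_nonneg_nonneg) auto

lemma ind_eval: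
  assumes k: "k \<ge> 1"
  shows "(indicator {real n / real k <.. real (n+1) / real k} x :: real) =
         (if x > 0 \<and> n = nat \<lceil>real k * x\<rceil> - 1 then 1 else 0)"
proof (cases "x > 0")
  case False
  have "\<not> real n / real k < x" using False k by (smt (verit) divide_nonneg_nonneg of_nat_0_le_iff)
  then show ?thesis using False by (simp split: split_indicator)
next
  case True
  have kp: "real k > 0" using k by simp
  have "x \<in> {real n / real k <.. real (n+1) / real k} \<longleftrightarrow> real n < real k * x \<and> real k * x \<le> real n + 1"
    using kp by (simp add: divide_less_eq le_divide_eq mult.commute add.commute)
  also have "\<dots> \<longleftrightarrow> \<lceil>real k * x\<rceil> = int n + 1" by (simp add: ceiling_eq_iff)
  also have "\<dots> \<longleftrightarrow> n = nat \<lceil>real k * x\<rceil> - 1"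
  proof -
    have "\<lceil>real k * x\<rceil> > 0" using True kp by simp
    moreover have "\<And>z::int. z > 0 \<Longrightarrow> (z = int n + 1 \<longleftrightarrow> n = nat z - 1)"
    proof -
      fix z :: int assume "z > 0"
      then obtain m where "z = int m" "m > 0" using pos_int_cases by blast
      then show "z = int n + 1 \<longleftrightarrow> n = nat z - 1" by auto
    qed
    ultimately show ?thesis by blast
  qed
  finally have iff: "x \<in> {real n / real k <.. real (n+1) / real k} \<longleftrightarrow> n = nat \<lceil>real k * x\<rceil> - 1" .
  show ?thesis
  proof (cases "x \<in> {real n / real k <.. real (n+1) / real k}")
    case T: True
    have i: "indicator {real n / real k <.. real (n+1) / real k} x = (1::real)" using T by simp
    have "n = nat \<lceil>real k * x\<rceil> - 1" using iff T by blast
    then show ?thesis using True i by simp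
  next
    case F: False
    have i: "indicator {real n / real k <.. real (n+1) / real k} x = (0::real)" using F by simp
    have "n \<noteq> nat \<lceil>real k * x\<rceil> - 1" using iff F by blast
    then show ?thesis using i by simp
  qed
qed

lemma Fk_eval:
  assumes k: "k \<ge> 1"
  shows "Fk \<beta> p k x = (if x > 0 then qf \<beta> p k (nat \<lceil>real k * x\<rceil>) else 0)"
proof -
  define N where "N = nat \<lceil>real k * x\<rceil> - 1"
  have "(\<lambda>n. qf \<beta> p k (n+1) * indicator {real n / real k <.. real (n+1) / real k} x)
      = (\<lambda>n. if n = N then (if x > 0 then qf \<beta> p k (N+1) else 0) else 0)"
    unfolding ind_eval[OF k] N_def by auto
  then have "Fk \<beta> p k x = (if x > 0 then qf \<beta> p k (N+1) else 0)"
    unfolding Fk_def using sums_single[of N "\<lambda>_. if x > 0 then qf \<beta> p k (N+1) else 0"]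
    by (simp add: sums_iff)
  moreover have "x > 0 \<Longrightarrow> N + 1 = nat \<lceil>real k * x\<rceil>"
  proof -
    assume "x > 0" then have "real k * x > 0" using k by simp
    then show ?thesis unfolding N_def by linarith
  qed
  ultimately show ?thesis by auto
qed

lemma Fk_0: "Fk \<beta> p 0 x = 0"
  unfolding Fk_def by simp

lemma summable_qf:
  assumes k: "k \<ge> 1" and p: "0 < p" "p < 1" and B: "\<And>m. \<bar>\<beta> m\<bar> \<le> B"
  shows "summable (\<lambda>n. qf \<beta> p k (n+1))"
proof (rule summable_comparison_test')
  have "summable (\<lambda>n. real n powr (p - 2))" using p by (simp add: summable_real_powr_iff)
  then have "summable (\<lambda>n. real (Suc n) powr (p - 2))" by (subst summable_Suc_iff)
  then show "summable (\<lambda>n. B\<^sup>2 * (real (n+1) powr (p - 2) / real k powr (p - 2)))"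
    by (intro summable_mult summable_divide) simp
next
  fix n :: nat
  define y where "y = real (n+1) / real k"
  have y: "y > 0" using k by (simp add: y_def)
  have "qf \<beta> p k (n+1) = (\<beta> (n+1))\<^sup>2 * (y powr p / (1 + y)\<^sup>2)" unfolding qf_def y_def by simp
  also have "\<dots> \<le> B\<^sup>2 * (y powr p / (1 + y)\<^sup>2)"
  proof (rule mult_right_mono)
    show "(\<beta> (n+1))\<^sup>2 \<le> B\<^sup>2" using power_mono[OF B[of "n+1"], of 2] by simp
  qed (use y in auto)
  also have "y powr p / (1 + y)\<^sup>2 \<le> (1 + y) powr (p - 2)" using p y by (intro frac_bound) auto
  then have "B\<^sup>2 * (y powr p / (1 + y)\<^sup>2) \<le> B\<^sup>2 * (1 + y) powr (p - 2)" by (intro mult_left_mono) auto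
  also have "(1 + y) powr (p - 2) \<le> y powr (p - 2)" using p y by (intro powr_mono2') auto
  also have "y powr (p - 2) = real (n+1) powr (p - 2) / real k powr (p - 2)"
    unfolding y_def by (rule powr_divide)
  finally show "norm (qf \<beta> p k (n+1)) \<le> B\<^sup>2 * (real (n+1) powr (p - 2) / real k powr (p - 2))"
    using qf_nonneg[of \<beta> p k "n+1"] by (simp add: mult_left_mono)
qed


lemma Fk_bound:
  assumes p: "0 < p" "p < 1" and B: "\<And>m. \<bar>\<beta> m\<bar> \<le> B"
  shows "norm (Fk \<beta> p k x) \<le> B\<^sup>2 * ((1 + x) powr (p - 2) * indicator {0..} x)"
proof (cases "k = 0 \<or> x \<le> 0")
  case True
  have "Fk \<beta> p k x = 0"
  proof (cases "k = 0")
    case True then show ?thesis by (simp add: Fk_0)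
  next
    case False then have "x \<le> 0" "k \<ge> 1" using \<open>k = 0 \<or> x \<le> 0\<close> by auto
    then show ?thesis by (simp add: Fk_eval)
  qed
  then show ?thesis by (simp split: split_indicator)
next
  case False
  then have k: "k \<ge> 1" and x: "x > 0" by auto
  define y where "y = real (nat \<lceil>real k * x\<rceil>) / real k"
  have "real k * x \<le> real (nat \<lceil>real k * x\<rceil>)" by linarith
  then have xy: "x \<le> y" using k unfolding y_def by (simp add: le_divide_eq mult.commute)
  have "Fk \<beta> p k x = (\<beta> (nat \<lceil>real k * x\<rceil>))\<^sup>2 * (y powr p / (1 + y)\<^sup>2)"
    using k x unfolding Fk_eval[OF k] qf_def y_def by simp
  also have "\<dots> \<le> B\<^sup>2 * (y powr p / (1 + y)\<^sup>2)"
  proof (rule mult_right_mono)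
    show "(\<beta> (nat \<lceil>real k * x\<rceil>))\<^sup>2 \<le> B\<^sup>2" using power_mono[OF B[of "nat \<lceil>real k * x\<rceil>"], of 2] by simp
  qed (use xy x in auto)
  also have "\<dots> \<le> B\<^sup>2 * (1 + x) powr (p - 2)"
    using p xy x by (intro mult_left_mono frac_bound) auto
  finally show ?thesis using x qf_nonneg[of \<beta> p k] k
    by (simp add: Fk_eval[OF k] split: split_indicator)
qed

lemma Fk_lim:
  assumes p: "0 < p" "p < 1" and \<beta>: "\<beta> \<longlonglongrightarrow> L"
  shows "(\<lambda>k. Fk \<beta> p k x) \<longlonglongrightarrow> (if x > 0 then L\<^sup>2 * x powr p / (1 + x)\<^sup>2 else 0)"
proof (cases "x > 0")
  case False
  have "\<forall>\<^sub>F k in sequentially. Fk \<beta> p k x = 0"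
    by (rule eventually_mono[OF eventually_ge_at_top[of "1::nat"]]) (use False in \<open>simp add: Fk_eval\<close>)
  then show ?thesis using False by (simp add: tendsto_eventually)
next
  case True
  define m where "m k = nat \<lceil>real k * x\<rceil>" for k
  have ev: "\<forall>\<^sub>F k in sequentially. Fk \<beta> p k x = qf \<beta> p k (m k)"
    using eventually_ge_at_top[of "1::nat"]
  proof eventually_elim
    case (elim k) then show ?case using True by (simp add: Fk_eval m_def)
  qed
  have mge: "real k * x \<le> real (m k)" for k unfolding m_def by linarith
  have mle: "real (m k) \<le> real k * x + 1" for k
  proof -
    have "real k * x \<ge> 0" using True by simp
    then show ?thesis unfolding m_def by linarith
  qed
  have r: "(\<lambda>k. real (m k) / real k) \<longlonglongrightarrow> x"
  proof (rule tendsto_sandwich[where f="\<lambda>_. x" and h="\<lambda>k. x + 1 / real k"])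
    show "\<forall>\<^sub>F k in sequentially. x \<le> real (m k) / real k"
      using eventually_ge_at_top[of "1::nat"]
    proof eventually_elim
      case (elim k) then show ?case using mge[of k] by (simp add: le_divide_eq mult.commute)
    qed
    show "\<forall>\<^sub>F k in sequentially. real (m k) / real k \<le> x + 1 / real k"
      using eventually_ge_at_top[of "1::nat"]
    proof eventually_elim
      case (elim k)
      then have "real k > 0" by simp
      have "real (m k) / real k \<le> (real k * x + 1) / real k" by (rule divide_right_mono[OF mle]) simp
      also have "\<dots> = x + 1 / real k" using \<open>real k > 0\<close> by (simp add: field_simps)
      finally show ?case .
    qed
    show "(\<lambda>k. x + 1 / real k) \<longlonglongrightarrow> x"
      using tendsto_add[OF tendsto_const lim_inverse_n'] by simp
  qed simp
  have mlim: "filterlim m sequentially sequentially"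
    unfolding filterlim_at_top
  proof
    fix Z :: nat
    obtain K :: nat where K: "real K > real Z / x" using reals_Archimedean2 by blast
    show "\<forall>\<^sub>F k in sequentially. Z \<le> m k"
      using eventually_ge_at_top[of K]
    proof eventually_elim
      case (elim k)
      have "real Z < real K * x" using K True by (simp add: divide_less_eq)
      also have "\<dots> \<le> real k * x" using elim True by (intro mult_right_mono) auto
      also have "\<dots> \<le> real (m k)" by (rule mge)
      finally show ?case by simp
    qed
  qed
  have bl: "(\<lambda>k. \<beta> (m k)) \<longlonglongrightarrow> L" by (rule filterlim_compose[OF \<beta> mlim])
  have "(\<lambda>k. (\<beta> (m k))\<^sup>2 * (real (m k) / real k) powr p / (1 + real (m k) / real k)\<^sup>2)
      \<longlonglongrightarrow> L\<^sup>2 * x powr p / (1 + x)\<^sup>2"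
    using True by (intro tendsto_intros bl r) auto
  then have "(\<lambda>k. qf \<beta> p k (m k)) \<longlonglongrightarrow> L\<^sup>2 * x powr p / (1 + x)\<^sup>2"
    unfolding qf_def .
  then show ?thesis using True Lim_transform_eventually[OF _ ev[THEN eventually_mono, of "\<lambda>k. qf \<beta> p k (m k) = Fk \<beta> p k x"]]
    by auto
qed


lemma Fk_integral:
  assumes k: "k \<ge> 1" and p: "0 < p" "p < 1" and B: "\<And>m. \<bar>\<beta> m\<bar> \<le> B"
  shows "(\<integral>x. Fk \<beta> p k x \<partial>lborel) = (\<Sum>n. qf \<beta> p k (n+1)) / real k"
proof -
  define f where "f n x = qf \<beta> p k (n+1) * indicator {real n / real k <.. real (n+1) / real k} x" for n x
  have kp: "real k > 0" using k by simp
  have le: "real n / real k \<le> real (n+1) / real k" for n using kp by (intro divide_right_mono) auto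
  have intf: "integrable lborel (f n)" for n
    unfolding f_def using le[of n] by (intro integrable_mult_right integrable_real_indicator) auto
  have intf_eq: "(\<integral>x. f n x \<partial>lborel) = qf \<beta> p k (n+1) / real k" for n
  proof -
    have "(\<integral>x. f n x \<partial>lborel) = qf \<beta> p k (n+1) * measure lborel {real n / real k <.. real (n+1) / real k}"
      unfolding f_def by simp
    also have "measure lborel {real n / real k <.. real (n+1) / real k} = 1 / real k"
    proof -
      have "real n / real k \<le> real (n+1) / real k" using kp by (intro divide_right_mono) auto
      then show ?thesis using kp by (simp add: field_simps)
    qed
    finally show ?thesis by simp
  qed
  have intnorm: "(\<integral>x. norm (f n x) \<partial>lborel) = qf \<beta> p k (n+1) / real k" for n
  proof -
    have "(\<lambda>x. norm (f n x)) = f n" using qf_nonneg[of \<beta> p k "n+1"]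
      unfolding f_def by (auto simp: fun_eq_iff split: split_indicator)
    then show ?thesis using intf_eq by simp
  qed
  have sq: "summable (\<lambda>n. qf \<beta> p k (n+1))" by (rule summable_qf[OF k p B])
  have fx: "f n x = (if n = nat \<lceil>real k * x\<rceil> - 1 then (if x > 0 then qf \<beta> p k (n+1) else 0) else 0)" for n x
    unfolding f_def ind_eval[OF k] by auto
  have summ: "summable (\<lambda>n. norm (f n x))" for x
  proof -
    define N where "N = nat \<lceil>real k * x\<rceil> - 1"
    have e: "(\<lambda>n. norm (f n x)) = (\<lambda>n. if n = N then (\<lambda>_. norm (f N x)) n else 0)"
      by (auto simp: fx fun_eq_iff N_def)
    show ?thesis unfolding e by (rule sums_summable[OF sums_single])
  qed
  have "(\<integral>x. (\<Sum>n. f n x) \<partial>lborel) = (\<Sum>n. (\<integral>x. f n x \<partial>lborel))"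
  proof (rule integral_suminf)
    show "\<And>i. integrable lborel (f i)" by (rule intf)
    show "AE x in lborel. summable (\<lambda>i. norm (f i x))" using summ by simp
    show "summable (\<lambda>i. \<integral>x. norm (f i x) \<partial>lborel)" unfolding intnorm
      using sq by (rule summable_divide)
  qed
  also have "\<dots> = (\<Sum>n. qf \<beta> p k (n+1) / real k)" unfolding intf_eq ..
  also have "\<dots> = (\<Sum>n. qf \<beta> p k (n+1)) / real k" using sq by (rule suminf_divide)
  finally show ?thesis unfolding Fk_def f_def .
qed

lemma riemann:
  assumes p: "0 < p" "p < 1" and \<beta>: "\<beta> \<longlonglongrightarrow> L" and L: "L > 0"
  shows "\<exists>I>0. (\<lambda>k. (\<Sum>n. qf \<beta> p k (n+1)) / real k) \<longlonglongrightarrow> I"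
proof -
  obtain B where B: "\<And>m. \<bar>\<beta> m\<bar> \<le> B"
    using convergent_imp_Bseq[OF convergentI[OF \<beta>]] by (metis BseqE real_norm_def)
  define w where "w x = B\<^sup>2 * ((1 + x) powr (p - 2) * indicator {0..} x)" for x :: real
  define \<phi> where "\<phi> x = (if x > 0 then L\<^sup>2 * x powr p / (1 + x)\<^sup>2 else 0)" for x :: real
  have meas: "Fk \<beta> p k \<in> borel_measurable lborel" for k unfolding Fk_def by measurable
  have measphi: "\<phi> \<in> borel_measurable lborel" unfolding \<phi>_def by measurable
  have intw: "integrable lborel w" unfolding w_def using integrable_w[OF p(2)] by (rule integrable_mult_right)
  have lim: "(\<lambda>k. \<integral>x. Fk \<beta> p k x \<partial>lborel) \<longlonglongrightarrow> (\<integral>x. \<phi> x \<partial>lborel)"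
  proof (rule integral_dominated_convergence[OF measphi meas intw])
    show "AE x in lborel. (\<lambda>k. Fk \<beta> p k x) \<longlonglongrightarrow> \<phi> x"
      unfolding \<phi>_def using Fk_lim[OF p \<beta>] by simp
    show "AE x in lborel. norm (Fk \<beta> p k x) \<le> w x" for k
      unfolding w_def using Fk_bound[OF p B] by simp
  qed
  define I where "I = (\<integral>x. \<phi> x \<partial>lborel)"
  have W: "(\<lambda>k. (\<Sum>n. qf \<beta> p k (n+1)) / real k) \<longlonglongrightarrow> I"
  proof (rule Lim_transform_eventually[OF lim[folded I_def]])
    show "\<forall>\<^sub>F k in sequentially. (\<integral>x. Fk \<beta> p k x \<partial>lborel) = (\<Sum>n. qf \<beta> p k (n+1)) / real k"
      by (rule eventually_mono[OF eventually_ge_at_top[of "1::nat"]]) (rule Fk_integral[OF _ p B])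
  qed
  have "L / 2 > 0" using L by simp
  from LIMSEQ_D[OF \<beta> this] obtain N where N: "\<And>m. m \<ge> N \<Longrightarrow> norm (\<beta> m - L) < L / 2" by blast
  have lb: "L\<^sup>2 / 36 \<le> (\<Sum>n. qf \<beta> p k (n+1)) / real k" if k: "k \<ge> max N 1" for k
  proof -
    have kp: "real k > 0" using k by simp
    have qlb: "L\<^sup>2 / 36 \<le> qf \<beta> p k m" if m: "k \<le> m" "m < 2 * k" for m
    proof -
      have "\<bar>\<beta> m - L\<bar> < L / 2" using N[of m] m k by simp
      then have bm: "\<beta> m > L / 2" by arith
      then have b2: "(\<beta> m)\<^sup>2 \<ge> (L / 2)\<^sup>2" using L by (intro power_mono) auto
      have r1: "real m / real k \<ge> 1" using m kp by (simp add: le_divide_eq)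
      have r2: "real m / real k \<le> 2" using m kp by (simp add: divide_le_eq)
      have P: "(real m / real k) powr p \<ge> 1" using r1 p by (intro ge_one_powr_ge_zero) auto
      have Q: "(1 + real m / real k)\<^sup>2 \<le> 9"
      proof -
        have "(1 + real m / real k)\<^sup>2 \<le> 3\<^sup>2" using r1 r2 by (intro power_mono) auto
        then show ?thesis by simp
      qed
      have Qp: "(1 + real m / real k)\<^sup>2 > 0" using r1 by simp
      have "(L / 2)\<^sup>2 \<le> (\<beta> m)\<^sup>2 * (real m / real k) powr p"
        using b2 P by (metis mult_mono mult.right_neutral zero_le_power2 zero_le_one)
      then have "(L / 2)\<^sup>2 / 9 \<le> (\<beta> m)\<^sup>2 * (real m / real k) powr p / (1 + real m / real k)\<^sup>2"
        using Q Qp by (intro frac_le) auto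
      then show ?thesis unfolding qf_def by (simp add: power_divide)
    qed
    have "real k * (L\<^sup>2 / 36) = (\<Sum>n\<in>{k - 1..<2 * k - 1}. L\<^sup>2 / 36)" using k by simp
    also have "\<dots> \<le> (\<Sum>n\<in>{k - 1..<2 * k - 1}. qf \<beta> p k (n+1))"
      using k by (intro sum_mono qlb) auto
    also have "\<dots> \<le> (\<Sum>n. qf \<beta> p k (n+1))"
      using summable_qf[OF _ p B, of k] k qf_nonneg by (intro sum_le_suminf) auto
    finally show ?thesis using kp by (simp add: field_simps)
  qed
  have "L\<^sup>2 / 36 \<le> I"
    using LIMSEQ_le_const[OF W] lb by blast
  moreover have "L\<^sup>2 / 36 > 0" using L by simp
  ultimately have "I > 0" by linarith
  then show ?thesis using W by blast
qed


lemma assemble_term: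
  assumes d: "0 < d" "d < 1/2" and k: "k \<ge> 1" and m: "m \<ge> 1"
  shows "qf (\<lambda>m. BB d m * real m powr (1 - d)) (2 * d) k m / real k
       = real k powr (1 - 2 * d) * (real m * BB d m / real (k + m))\<^sup>2"
proof -
  define M where "M = real m"
  define K where "K = real k"
  have Mp: "M > 0" and Kp: "K > 0" using m k by (auto simp: M_def K_def)
  have h1: "(M powr (1 - d))\<^sup>2 * M powr (2 * d) = M\<^sup>2"
  proof -
    have "M powr ((1 - d) + (1 - d) + 2 * d) = M powr (1 - d) * M powr (1 - d) * M powr (2 * d)"
      by (simp only: powr_add)
    then have "(M powr (1 - d))\<^sup>2 * M powr (2 * d) = M powr ((1 - d) + (1 - d) + 2 * d)"
      by (simp only: power2_eq_square)
    also have "(1 - d) + (1 - d) + 2 * d = 2" by simp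
    finally show ?thesis using Mp by simp
  qed
  have h2: "K powr (1 - 2 * d) = K / K powr (2 * d)" using Kp by (simp add: powr_diff)
  have h3: "(M / K) powr (2 * d) = M powr (2 * d) / K powr (2 * d)" using Mp Kp by (simp add: powr_divide)
  have h4: "1 + M / K = (K + M) / K" using Kp by (simp add: field_simps)
  have pos: "K powr (2 * d) > 0" "K + M > 0" using Kp Mp by auto
  have "qf (\<lambda>m. BB d m * real m powr (1 - d)) (2 * d) k m / real k
      = (BB d m)\<^sup>2 * ((M powr (1 - d))\<^sup>2 * M powr (2 * d)) * K\<^sup>2 / (K powr (2 * d) * (K + M)\<^sup>2 * K)"
    unfolding qf_def M_def[symmetric] K_def[symmetric] h3 h4 using pos Kp
    by (simp add: power_mult_distrib power_divide field_simps)
  also have "\<dots> = K powr (1 - 2 * d) * (M * BB d m / (K + M))\<^sup>2"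
  proof -
    have gen: "\<And>b M K P S :: real. K > 0 \<Longrightarrow> P > 0 \<Longrightarrow> S > 0 \<Longrightarrow>
       b\<^sup>2 * M\<^sup>2 * K\<^sup>2 / (P * S\<^sup>2 * K) = (K / P) * (M * b / S)\<^sup>2"
      by (simp add: field_simps power2_eq_square)
    show ?thesis unfolding h1 h2 using gen[OF Kp pos(1) pos(2), of "BB d m" M] .
  qed
  finally show ?thesis by (simp add: M_def K_def)
qed

lemma main_asymp:
  assumes d: "0 < d" "d < 1/2"
  shows "\<exists>\<Lambda>>0. (\<lambda>k. real k * (AS d k)\<^sup>2 * Tsum d k) \<longlonglongrightarrow> \<Lambda>"
proof -
  define \<beta> where "\<beta> m = BB d m * real m powr (1 - d)" for m
  have \<beta>lim: "\<beta> \<longlonglongrightarrow> 1 / Gamma d"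
    unfolding \<beta>_def BB_def using poch_asymp[of d] d by simp
  have Gd: "Gamma d > 0" using d by (intro Gamma_real_pos) simp
  have p: "0 < 2 * d" "2 * d < 1" using d by auto
  obtain I where I: "I > 0" and W: "(\<lambda>k. (\<Sum>n. qf \<beta> (2 * d) k (n+1)) / real k) \<longlonglongrightarrow> I"
    using riemann[OF p \<beta>lim] Gd by auto
  obtain B where B: "\<And>m. \<bar>\<beta> m\<bar> \<le> B"
    using convergent_imp_Bseq[OF convergentI[OF \<beta>lim]] by (metis BseqE real_norm_def)
  define \<alpha> where "\<alpha> k = AS d k * real k powr d" for k
  have \<alpha>lim: "\<alpha> \<longlonglongrightarrow> 1 / Gamma (1 - d)"
    unfolding \<alpha>_def AS_def using poch_asymp[of "1 - d"] d by simp
  have G1d: "Gamma (1 - d) > 0" using d by (intro Gamma_real_pos) simp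
  have eq: "real k * (AS d k)\<^sup>2 * Tsum d k = (\<alpha> k)\<^sup>2 * ((\<Sum>n. qf \<beta> (2 * d) k (n+1)) / real k)"
    if k: "k \<ge> 1" for k
  proof -
    define c where "c = real k powr (1 - 2 * d)"
    have cp: "c > 0" using k by (simp add: c_def)
    define t where "t n = (real (n+1) * BB d (n+1) / real (k + 1 + n))\<^sup>2" for n
    have qt: "qf \<beta> (2 * d) k (n+1) / real k = c * t n" for n
      unfolding \<beta>_def c_def t_def using assemble_term[OF d k, of "n+1"] by (simp add: add_ac)
    have sq: "summable (\<lambda>n. qf \<beta> (2 * d) k (n+1) / real k)"
      by (intro summable_divide summable_qf[OF k p B])
    then have st: "summable t" using summable_mult[OF sq, of "1/c"] cp unfolding qt by simp
    have "(\<Sum>n. qf \<beta> (2 * d) k (n+1)) / real k = (\<Sum>n. qf \<beta> (2 * d) k (n+1) / real k)"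
      using summable_qf[OF k p B] by (rule suminf_divide[symmetric])
    also have "\<dots> = c * Tsum d k" unfolding qt Tsum_def t_def[symmetric] using st by (rule suminf_mult)
    finally have W: "(\<Sum>n. qf \<beta> (2 * d) k (n+1)) / real k = c * Tsum d k" .
    have "(\<alpha> k)\<^sup>2 * c = (AS d k)\<^sup>2 * real k"
    proof -
      have "real k powr (d + d + (1 - 2 * d)) = real k powr d * real k powr d * real k powr (1 - 2 * d)"
        by (simp only: powr_add)
      then have "(real k powr d)\<^sup>2 * c = real k powr (d + d + (1 - 2 * d))"
        unfolding c_def by (simp only: power2_eq_square)
      also have "d + d + (1 - 2 * d) = 1" by simp
      finally have "(real k powr d)\<^sup>2 * c = real k" using k by simp
      then show ?thesis unfolding \<alpha>_def by (simp add: power_mult_distrib)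
    qed
    then show ?thesis unfolding W by (simp add: algebra_simps)
  qed
  have "(\<lambda>k. (\<alpha> k)\<^sup>2 * ((\<Sum>n. qf \<beta> (2 * d) k (n+1)) / real k)) \<longlonglongrightarrow> (1 / Gamma (1 - d))\<^sup>2 * I"
    by (intro tendsto_intros \<alpha>lim W)
  then have "(\<lambda>k. real k * (AS d k)\<^sup>2 * Tsum d k) \<longlonglongrightarrow> (1 / Gamma (1 - d))\<^sup>2 * I"
    by (rule Lim_transform_eventually)
       (rule eventually_mono[OF eventually_ge_at_top[of "1::nat"]], use eq in simp)
  moreover have "(1 / Gamma (1 - d))\<^sup>2 * I > 0" using G1d I by simp
  ultimately show ?thesis by blast
qed


theorem proposition1:
  fixes d s2 :: real
  assumes "0 < d" "d < 1/2" "s2 > 0"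
  shows "\<exists>C>0. \<forall>(M :: 'a measure) eps X. fi_noise M d s2 eps X \<longrightarrow>
           (\<lambda>k::nat. (\<integral>\<omega>. (X (int k + 1) \<omega> - fi_pred d X k \<omega>)\<^sup>2 \<partial>M) - s2 - C / real k)
             \<in> o(\<lambda>k. 1 / real k)"
proof -
  obtain \<Lambda> where \<Lambda>: "\<Lambda> > 0" and lim: "(\<lambda>k. real k * (AS d k)\<^sup>2 * Tsum d k) \<longlonglongrightarrow> \<Lambda>"
    using main_asymp[OF assms(1,2)] by blast
  show ?thesis
  proof (intro exI[of _ "s2 * \<Lambda>"] conjI allI impI)
    show "s2 * \<Lambda> > 0" using assms(3) \<Lambda> by simp
    fix M :: "'a measure" and eps X assume N: "fi_noise M d s2 eps X"
    define f where "f k = (\<integral>\<omega>. (X (int k + 1) \<omega> - fi_pred d X k \<omega>)\<^sup>2 \<partial>M) - s2 - s2 * \<Lambda> / real k" for k :: nat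
    have ev: "\<forall>\<^sub>F k in sequentially. s2 * (real k * (AS d k)\<^sup>2 * Tsum d k - \<Lambda>) = f k / (1 / real k)"
    proof (rule eventually_mono[OF eventually_ge_at_top[of "1::nat"]])
      fix k :: nat assume k: "k \<ge> 1"
      have E: "(\<integral>\<omega>. (X (int k + 1) \<omega> - fi_pred d X k \<omega>)\<^sup>2 \<partial>M) = s2 * (1 + (AS d k)\<^sup>2 * Tsum d k)"
        by (rule error_formula(2)[OF assms(1,2,3) N])
      show "s2 * (real k * (AS d k)\<^sup>2 * Tsum d k - \<Lambda>) = f k / (1 / real k)"
        unfolding f_def E using k by (simp add: field_simps)
    qed
    have "(\<lambda>k. s2 * (real k * (AS d k)\<^sup>2 * Tsum d k - \<Lambda>)) \<longlonglongrightarrow> s2 * (\<Lambda> - \<Lambda>)"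
      by (intro tendsto_intros lim)
    then have "(\<lambda>k. f k / (1 / real k)) \<longlonglongrightarrow> 0"
      using Lim_transform_eventually[OF _ ev] by simp
    then have "f \<in> o(\<lambda>k. 1 / real k)"
      by (rule smalloI_tendsto)
         (rule eventually_mono[OF eventually_ge_at_top[of "1::nat"]], simp)
    then show "(\<lambda>k::nat. (\<integral>\<omega>. (X (int k + 1) \<omega> - fi_pred d X k \<omega>)\<^sup>2 \<partial>M) - s2 - s2 * \<Lambda> / real k)
             \<in> o(\<lambda>k. 1 / real k)" unfolding f_def .
  qed
qed


end
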